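(* For every integer $n\ge 1$ and every real $y\in[0,1]$, $$\rho(n-y)=\rho(n)+\sum_{j=1}^{n-1}\rho(n-j)\,M_{j,n}(y),$$ where $\rho$ is the Dickman function and $M_{j,n}$ are the multiple polylogarithms defined in the context.
   Context: The Dickman function $\rho:[0,\infty)\to\mathbb{R}$ is the continuous function with $\rho(u)=1$ for $u\in[0,1]$ and $u\rho'(u)=-\rho(u-1)$ for $u>1$. For integers $n>j>0$ and real $y\in[0,1]$ define $$M_{j,n}(y)=\sum_{n_1>n_2>\cdots>n_j>0}\ \prod_{i=1}^{j}\frac{z_i^{n_i}}{n_i},\qquad z_1=\frac{y}{n},\quad z_i=\frac{n+2-i}{n+1-i}\ \text{for } 1<i\le j,$$ the sum running over integers $n_1,\dots,n_j$ (it converges for these parameters). *)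

theory Defs
  imports "HOL-Analysis.Analysis"
begin

text \<open>The Dickman function. Mathematically it lives on [0,\<infinity>); as a total
function real \<Rightarrow> real we fix the (irrelevant) convention rho u = 0 for u < 0
so that it is uniquely determined.\<close>
definition dickman :: "real \<Rightarrow> real" where
  "dickman = (THE \<rho>. continuous_on {0..} \<rho>
      \<and> (\<forall>u\<in>{0..1}. \<rho> u = 1)
      \<and> (\<forall>u>1. (\<rho> has_real_derivative (- \<rho> (u - 1) / u)) (at u))
      \<and> (\<forall>u<0. \<rho> u = 0))"

text \<open>The parameters z_1, ..., z_j, indexed 0-based: zpar n y k = z_(k+1).\<close>
definition zpar :: "nat \<Rightarrow> real \<Rightarrow> nat \<Rightarrow> real" where
  "zpar n y k = (if k = 0 then y / real n
                 else (real n + 1 - real k) / (real n - real k))"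

definition Midx :: "nat \<Rightarrow> nat list set" where
  "Midx j = {ns. length ns = j \<and> sorted_wrt (>) ns \<and> (\<forall>m\<in>set ns. m > 0)}"

definition M :: "nat \<Rightarrow> nat \<Rightarrow> real \<Rightarrow> real" where
  "M j n y = (\<Sum>\<^sub>\<infinity> ns \<in> Midx j.
       (\<Prod>k<j. zpar n y k ^ (ns ! k) / real (ns ! k)))"

end

theory Submission
  imports Defs
begin

lemma integral_le1_zero: "u \<le> 1 \<Longrightarrow> integral {1..u} (f::real\<Rightarrow>real) = 0"
proof (cases "u < 1")
  case True then show ?thesis by simp
next
  case False
  assume "u \<le> 1" with False have "u = 1" by simp
  then show ?thesis by simp
qed

fun rk :: "nat \<Rightarrow> real \<Rightarrow> real" where
  "rk 0 u = (if u < 0 then 0 else 1)"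
| "rk (Suc k) u = (if u < 0 then 0 else 1 - integral {1..u} (\<lambda>t. rk k (t - 1) / t))"

lemma rk_h_cont:
  assumes "\<And>b. continuous_on {0..b} (rk k)"
  shows "continuous_on {1..c} (\<lambda>t. rk k (t - 1) / t)"
proof (rule continuous_on_divide)
  show "continuous_on {1..c} (\<lambda>t. rk k (t - 1))"
    by (rule continuous_on_compose2[OF assms[of "c - 1"]]) (auto intro!: continuous_intros)
qed (auto intro!: continuous_intros)

lemma rk_cont: "continuous_on {0..b} (rk k)"
proof (induction k arbitrary: b)
  case 0
  show ?case by (rule continuous_on_eq[OF continuous_on_const[of _ 1]]) auto
next
  case (Suc k)
  have hc: "\<And>c. continuous_on {1..c} (\<lambda>t. rk k (t - 1) / t)"
    by (rule rk_h_cont) (rule Suc.IH)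
  show ?case
  proof (cases "b \<le> 1")
    case True
    show ?thesis
      by (rule continuous_on_eq[OF continuous_on_const[of _ 1]]) (use True in \<open>auto simp: integral_le1_zero\<close>)
  next
    case False
    have "continuous_on ({0..1} \<union> {1..b}) (rk (Suc k))"
    proof (rule continuous_on_closed_Un)
      show "continuous_on {0..1} (rk (Suc k))"
        by (rule continuous_on_eq[OF continuous_on_const[of _ 1]]) (auto simp: integral_le1_zero)
      show "continuous_on {1..b} (rk (Suc k))"
        by (rule continuous_on_eq[OF continuous_on_diff[OF continuous_on_const[of _ 1]
              indefinite_integral_continuous_1[OF integrable_continuous_real[OF hc]]]]) auto
    qed auto
    moreover have "{0..1} \<union> {1..b} = {0..b}" using False by auto
    ultimately show ?thesis by simp
  qed
qed

lemma rk_Suc_eq: "u \<le> real k + 1 \<Longrightarrow> rk (Suc k) u = rk k u"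
proof (induction k arbitrary: u)
  case 0
  then show ?case by (simp add: integral_le1_zero)
next
  case (Suc k)
  have "integral {1..u} (\<lambda>t. rk (Suc k) (t - 1) / t) = integral {1..u} (\<lambda>t. rk k (t - 1) / t)"
  proof (rule integral_cong)
    fix x assume "x \<in> {1..u}"
    then have "x - 1 \<le> real k + 1" using Suc.prems by auto
    show "rk (Suc k) (x - 1) / x = rk k (x - 1) / x" by (subst Suc.IH[OF \<open>x - 1 \<le> real k + 1\<close>]) (rule refl)
  qed
  then show ?case by (simp only: rk.simps)
qed

lemma rk_mono_eq: "k \<le> m \<Longrightarrow> u \<le> real k + 1 \<Longrightarrow> rk m u = rk k u"
proof (induction m rule: dec_induct)
  case base then show ?case by simp
next
  case (step m)
  have "rk (Suc m) u = rk m u" by (rule rk_Suc_eq) (use step in auto)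
  then show ?case using step by simp
qed

definition rho :: "real \<Rightarrow> real" where "rho u = rk (nat \<lceil>u\<rceil>) u"

lemma rho_eq: "u \<le> real K + 1 \<Longrightarrow> rho u = rk K u"
proof -
  assume u: "u \<le> real K + 1"
  have c: "u \<le> real (nat \<lceil>u\<rceil>) + 1" using real_nat_ceiling_ge[of u] by linarith
  show ?thesis
  proof (cases "nat \<lceil>u\<rceil> \<le> K")
    case True then show ?thesis unfolding rho_def using rk_mono_eq[OF True c] by simp
  next
    case False
    then have "K \<le> nat \<lceil>u\<rceil>" by linarith
    then show ?thesis unfolding rho_def using rk_mono_eq[of K "nat \<lceil>u\<rceil>" u] u by simp
  qed
qed

lemma cont_glue:
  fixes f :: "real \<Rightarrow> real"
  assumes "\<And>b. continuous_on {0..b} f"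
  shows "continuous_on {0..} f"
  unfolding continuous_on_eq_continuous_within
proof
  fix x :: real assume x: "x \<in> {0..}"
  have "continuous (at x within {0..x+1}) f"
    using assms[of "x+1"] x unfolding continuous_on_eq_continuous_within by auto
  moreover have "at x within {0..} = at x within {0..x+1}"
    by (rule at_within_nhd[where S="{..<x+1}"]) auto
  ultimately show "continuous (at x within {0..}) f" by simp
qed

lemma rho_cont: "continuous_on {0..} rho"
proof (rule cont_glue)
  fix b :: real
  show "continuous_on {0..b} rho"
  proof (rule continuous_on_eq[OF rk_cont[of b "nat \<lceil>b\<rceil>"]])
    fix u assume "u \<in> {0..b}"
    then have "u \<le> b" by simp
    then have "u \<le> real (nat \<lceil>b\<rceil>) + 1" using real_nat_ceiling_ge[of b] by linarith
    then show "rk (nat \<lceil>b\<rceil>) u = rho u" by (simp add: rho_eq)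
  qed
qed

lemma rho_neg: "u < 0 \<Longrightarrow> rho u = 0"
  using rho_eq[of u 0] by simp

lemma rho_01: "0 \<le> u \<Longrightarrow> u \<le> 1 \<Longrightarrow> rho u = 1"
  using rho_eq[of u 0] by simp

lemma rho_deriv:
  assumes u: "u > 1"
  shows "(rho has_real_derivative (- rho (u - 1) / u)) (at u)"
proof -
  define k where "k = nat \<lceil>u\<rceil>"
  have uk: "u \<le> real k" unfolding k_def by (rule real_nat_ceiling_ge)
  define h where "h = (\<lambda>t. rk k (t - 1) / t)"
  have hc: "continuous_on {1..u+1} h"
    unfolding h_def by (rule rk_h_cont) (rule rk_cont)
  have "((\<lambda>x. integral {1..x} h) has_real_derivative h u) (at u within {1..u+1})"
    by (rule integral_has_real_derivative[OF hc]) (use u in auto)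
  moreover have "at u within {1..u+1} = at u"
    by (rule at_within_interior) (use u in auto)
  ultimately have d1: "((\<lambda>x. integral {1..x} h) has_real_derivative h u) (at u)" by simp
  have d2: "((\<lambda>x. 1 - integral {1..x} h) has_real_derivative - h u) (at u)"
    using DERIV_diff[OF DERIV_const d1] by simp
  have d3: "(rho has_real_derivative - h u) (at u)"
  proof (rule has_field_derivative_transform_within_open[OF d2, where S="{0<..<real k + 2}"])
    fix x assume x: "x \<in> {0<..<real k + 2}"
    then have "rho x = rk (Suc k) x" by (intro rho_eq) auto
    then show "1 - integral {1..x} h = rho x" using x by (simp add: h_def)
  qed (use u uk in auto)
  have "rho (u - 1) = rk k (u - 1)" by (rule rho_eq) (use uk in auto)
  then have "h u = rho (u - 1) / u" by (simp add: h_def)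
  with d3 show ?thesis by simp
qed

definition PD :: "(real \<Rightarrow> real) \<Rightarrow> bool" where
  "PD \<rho> \<longleftrightarrow> continuous_on {0..} \<rho>
      \<and> (\<forall>u\<in>{0..1}. \<rho> u = 1)
      \<and> (\<forall>u>1. (\<rho> has_real_derivative (- \<rho> (u - 1) / u)) (at u))
      \<and> (\<forall>u<0. \<rho> u = 0)"

lemma PD_rho: "PD rho"
  unfolding PD_def using rho_cont rho_01 rho_neg rho_deriv by auto

lemma PD_unique_le:
  assumes f: "PD f" and g: "PD g"
  shows "\<forall>u. u \<le> real k + 1 \<longrightarrow> f u = g u"
proof (induction k)
  case 0
  show ?case
  proof (intro allI impI)
    fix u :: real assume "u \<le> real 0 + 1"
    then show "f u = g u" using f g unfolding PD_def
      by (cases "u < 0") auto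
  qed
next
  case (Suc k)
  show ?case
  proof (intro allI impI)
    fix u :: real assume u: "u \<le> real (Suc k) + 1"
    show "f u = g u"
    proof (cases "u \<le> real k + 1")
      case True then show ?thesis using Suc by auto
    next
      case False
      define D where "D = (\<lambda>x. f x - g x)"
      have cf: "continuous_on {0..} f" and cg: "continuous_on {0..} g" using f g by (auto simp: PD_def)
      have cD: "continuous_on {real k + 1..real k + 2} D"
      proof -
        have "continuous_on {real k + 1..real k + 2} f" by (rule continuous_on_subset[OF cf]) auto
        moreover have "continuous_on {real k + 1..real k + 2} g" by (rule continuous_on_subset[OF cg]) auto
        ultimately show ?thesis unfolding D_def by (rule continuous_on_diff)
      qed
      have dD: "DERIV D x :> 0" if x: "real k + 1 < x" "x < real k + 2" for x
      proof -
        have df: "(f has_real_derivative (- f (x - 1) / x)) (at x)"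
          using f x unfolding PD_def by auto
        have dg: "(g has_real_derivative (- g (x - 1) / x)) (at x)"
          using g x unfolding PD_def by auto
        have "f (x - 1) = g (x - 1)" using Suc x by auto
        then show "DERIV D x :> 0" unfolding D_def using DERIV_diff[OF df dg] by simp
      qed
      have "D u = D (real k + 1)"
        by (rule DERIV_isconst2[OF _ cD dD]) (use u False in auto)
      moreover have "D (real k + 1) = 0" using Suc unfolding D_def by auto
      ultimately show ?thesis unfolding D_def by simp
    qed
  qed
qed

lemma PD_unique: "PD f \<Longrightarrow> PD g \<Longrightarrow> f = g"
proof
  fix u assume f: "PD f" and g: "PD g"
  have "u \<le> real (nat \<lceil>u\<rceil>) + 1" using real_nat_ceiling_ge[of u] by linarith
  then show "f u = g u" using PD_unique_le[OF f g] by blast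
qed

lemma dickman_rho: "dickman = rho"
  unfolding dickman_def
  by (rule the_equality) (use PD_rho PD_unique in \<open>auto simp: PD_def\<close>)


definition Idx :: "nat \<Rightarrow> nat \<Rightarrow> nat list set" where
  "Idx j m = {ns \<in> Midx j. \<forall>a\<in>set ns. a < m}"

definition pr :: "real list \<Rightarrow> nat list \<Rightarrow> real" where
  "pr zs ns = (\<Prod>k<length zs. zs ! k ^ (ns ! k) / real (ns ! k))"

definition Tf :: "real list \<Rightarrow> nat \<Rightarrow> real" where
  "Tf zs m = (\<Sum>ns\<in>Idx (length zs) m. pr zs ns)"

definition Lp :: "real list \<Rightarrow> real \<Rightarrow> real" where
  "Lp zs x = (\<Sum>m. Tf zs m / real m * x ^ m)"

lemma finite_Idx: "finite (Idx j m)"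
proof (rule finite_subset)
  show "Idx j m \<subseteq> {xs. set xs \<subseteq> {..<m} \<and> length xs = j}"
    unfolding Idx_def Midx_def by auto
  show "finite {xs. set xs \<subseteq> {..<m} \<and> length xs = j}"
    by (rule finite_lists_length_eq) simp
qed

lemma Midx_Cons: "(a # t \<in> Midx (Suc j)) \<longleftrightarrow> (0 < a \<and> t \<in> Midx j \<and> (\<forall>b\<in>set t. b < a))"
  unfolding Midx_def by auto

lemma Midx_0: "Midx 0 = {[]}"
  unfolding Midx_def by auto

lemma pr_Cons: "pr (z # zs) (a # t) = z ^ a / real a * pr zs t"
  unfolding pr_def by (simp only: length_Cons prod.lessThan_Suc_shift nth_Cons_0 nth_Cons_Suc)

lemma Midx_Suc_image:
  "Midx (Suc j) = (\<lambda>(a, t). a # t) ` (SIGMA a:UNIV. {t. 0 < a \<and> t \<in> Idx j a})"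
proof (intro equalityI subsetI)
  fix ns assume ns: "ns \<in> Midx (Suc j)"
  then obtain a t where at: "ns = a # t" unfolding Midx_def by (cases ns) auto
  with ns have "0 < a \<and> t \<in> Idx j a" by (auto simp: Midx_Cons Idx_def)
  then show "ns \<in> (\<lambda>(a, t). a # t) ` (SIGMA a:UNIV. {t. 0 < a \<and> t \<in> Idx j a})"
    using at by force
next
  fix ns assume "ns \<in> (\<lambda>(a, t). a # t) ` (SIGMA a:UNIV. {t. 0 < a \<and> t \<in> Idx j a})"
  then show "ns \<in> Midx (Suc j)" by (auto simp: Midx_Cons Idx_def)
qed

lemma Idx_Suc:
  "Idx (Suc j) m = (\<lambda>(a, t). a # t) ` (SIGMA a:{..<m}. {t. 0 < a \<and> t \<in> Idx j a})"
proof (intro equalityI subsetI)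
  fix ns assume ns: "ns \<in> Idx (Suc j) m"
  then obtain a t where at: "ns = a # t" unfolding Idx_def Midx_def by (cases ns) auto
  with ns have "a < m \<and> 0 < a \<and> t \<in> Idx j a" by (auto simp: Midx_Cons Idx_def)
  then show "ns \<in> (\<lambda>(a, t). a # t) ` (SIGMA a:{..<m}. {t. 0 < a \<and> t \<in> Idx j a})"
    using at by force
next
  fix ns assume "ns \<in> (\<lambda>(a, t). a # t) ` (SIGMA a:{..<m}. {t. 0 < a \<and> t \<in> Idx j a})"
  then show "ns \<in> Idx (Suc j) m" apply (auto simp: Midx_Cons Idx_def) using less_trans by blast
qed

lemma inj_Cons_pair: "inj_on (\<lambda>(a, t). a # t) A"
  by (auto simp: inj_on_def)

lemma fiber_sum: "(\<Sum>t\<in>{t. 0 < a \<and> t \<in> Idx j a}. z ^ a / real a * pr zs t) = z ^ a / real a * Tf zs a"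
  if "length zs = j"
proof (cases "a = 0")
  case True then show ?thesis by simp
next
  case False
  then have "{t. 0 < a \<and> t \<in> Idx j a} = Idx j a" by auto
  then show ?thesis using that by (simp add: Tf_def sum_distrib_left)
qed

lemma Idx_0: "Idx 0 m = {[]}"
  by (auto simp: Idx_def Midx_0)

lemma Tf_Nil: "Tf [] m = 1"
  by (simp add: Tf_def Idx_0 pr_def)

lemma Tf_Cons: "Tf (z # zs) m = (\<Sum>a<m. z ^ a / real a * Tf zs a)"
proof -
  have "Tf (z # zs) m = (\<Sum>ns\<in>Idx (Suc (length zs)) m. pr (z # zs) ns)"
    by (simp add: Tf_def)
  also have "\<dots> = (\<Sum>(a,t)\<in>(SIGMA a:{..<m}. {t. 0 < a \<and> t \<in> Idx (length zs) a}). pr (z # zs) (a # t))"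
    unfolding Idx_Suc by (subst sum.reindex[OF inj_Cons_pair]) (simp add: o_def case_prod_unfold)
  also have "\<dots> = (\<Sum>a<m. \<Sum>t\<in>{t. 0 < a \<and> t \<in> Idx (length zs) a}. pr (z # zs) (a # t))"
    by (subst sum.Sigma) (auto intro: finite_subset[OF _ finite_Idx[of "length zs"]])
  also have "\<dots> = (\<Sum>a<m. z ^ a / real a * Tf zs a)"
    by (intro sum.cong refl) (simp only: pr_Cons fiber_sum[OF refl])
  finally show ?thesis .
qed

lemma pr_nonneg: "(\<forall>z\<in>set zs. 0 \<le> z) \<Longrightarrow> 0 \<le> pr zs ns"
  unfolding pr_def by (intro prod_nonneg) auto

lemma Tf_nonneg: "(\<forall>z\<in>set zs. 0 \<le> z) \<Longrightarrow> 0 \<le> Tf zs m"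
  unfolding Tf_def by (intro sum_nonneg pr_nonneg)

lemma prod_list_ge1: "(\<forall>z\<in>set zs. 1 \<le> (z::real)) \<Longrightarrow> 1 \<le> prod_list zs"
  by (induction zs) (auto intro: order_trans[OF _ mult_mono[of 1 _ 1, simplified]])

lemma div_nat_le: assumes z: "0 \<le> (w::real)" shows "w / real a \<le> w"
proof (cases a)
  case 0 then show ?thesis using z by simp
next
  case (Suc b)
  have "w / real a \<le> w / 1"
    by (rule divide_left_mono) (use Suc z in auto)
  then show ?thesis by simp
qed

lemma pow_div_le: "0 \<le> (z::real) \<Longrightarrow> z ^ a / real a \<le> z ^ a"
  by (rule div_nat_le) simp

lemma Tf_bound:
  assumes "\<forall>z\<in>set zs. 1 < z"
  shows "\<exists>C\<ge>0. \<forall>m. Tf zs m \<le> C * prod_list zs ^ m"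
  using assms
proof (induction zs)
  case Nil
  then show ?case by (intro exI[of _ 1]) (simp add: Tf_Nil)
next
  case (Cons z zs)
  then obtain C where C: "C \<ge> 0" "\<And>m. Tf zs m \<le> C * prod_list zs ^ m" by auto
  define P where "P = prod_list zs"
  have P1: "1 \<le> P" unfolding P_def using Cons.prems by (intro prod_list_ge1) auto
  have z1: "1 < z" using Cons.prems by auto
  define q where "q = z * P"
  have q1: "1 < q" unfolding q_def using P1 z1
    by (metis less_1_mult less_eq_real_def mult.right_neutral)
  have nn: "\<forall>w\<in>set zs. 0 \<le> w" using Cons.prems by auto
  show ?case
  proof (intro exI[of _ "C / (q - 1)"] conjI allI)
    show "0 \<le> C / (q - 1)" using C q1 by simp
    fix m
    have "Tf (z # zs) m = (\<Sum>a<m. z ^ a / real a * Tf zs a)" by (rule Tf_Cons)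
    also have "\<dots> \<le> (\<Sum>a<m. z ^ a * (C * P ^ a))"
    proof (intro sum_mono mult_mono)
      fix a show "z ^ a / real a \<le> z ^ a" using z1 by (intro pow_div_le) auto
      show "Tf zs a \<le> C * P ^ a" using C unfolding P_def by auto
      show "0 \<le> z ^ a" using z1 by simp
      show "0 \<le> Tf zs a" using nn by (rule Tf_nonneg)
    qed
    also have "\<dots> = C * (\<Sum>a<m. q ^ a)"
      by (simp add: sum_distrib_left q_def power_mult_distrib mult_ac)
    also have "(\<Sum>a<m. q ^ a) = (q ^ m - 1) / (q - 1)"
      using q1 by (simp add: sum_gp_strict field_simps)
    also have "C * ((q ^ m - 1) / (q - 1)) \<le> C / (q - 1) * q ^ m"
    proof -
      have "(q ^ m - 1) / (q - 1) \<le> q ^ m / (q - 1)" using q1 by (intro divide_right_mono) auto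
      then have "C * ((q ^ m - 1) / (q - 1)) \<le> C * (q ^ m / (q - 1))" using C by (intro mult_left_mono) auto
      then show ?thesis by simp
    qed
    also have "q = prod_list (z # zs)" by (simp add: q_def P_def)
    finally show "Tf (z # zs) m \<le> C / (q - 1) * prod_list (z # zs) ^ m"
      using \<open>q = prod_list (z # zs)\<close> by simp
  qed
qed

lemma Tf_summable:
  assumes zs: "\<forall>z\<in>set zs. 1 < z" and K: "0 \<le> K" "K * prod_list zs < 1"
  shows "summable (\<lambda>m. Tf zs m / real m * K ^ m)"
proof -
  obtain C where C: "C \<ge> 0" "\<And>m. Tf zs m \<le> C * prod_list zs ^ m" using Tf_bound[OF zs] by auto
  have P1: "1 \<le> prod_list zs" using zs by (intro prod_list_ge1) auto
  have nn: "\<forall>w\<in>set zs. 0 \<le> w" using zs by auto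
  show ?thesis
  proof (rule summable_comparison_test)
    show "\<exists>N. \<forall>n\<ge>N. norm (Tf zs n / real n * K ^ n) \<le> C * (K * prod_list zs) ^ n"
    proof (intro exI allI impI)
      fix n :: nat
      have "norm (Tf zs n / real n * K ^ n) = Tf zs n / real n * K ^ n"
        using Tf_nonneg[OF nn] K by simp
      also have "\<dots> \<le> Tf zs n * K ^ n"
        using Tf_nonneg[OF nn, of n] K by (intro mult_right_mono div_nat_le) auto
      also have "\<dots> \<le> C * prod_list zs ^ n * K ^ n"
        using C K by (intro mult_right_mono) auto
      also have "\<dots> = C * (K * prod_list zs) ^ n" by (simp add: power_mult_distrib)
      finally show "norm (Tf zs n / real n * K ^ n) \<le> C * (K * prod_list zs) ^ n" .
    qed
    show "summable (\<lambda>n. C * (K * prod_list zs) ^ n)"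
      using K P1 by (intro summable_mult summable_geometric) auto
  qed
qed

lemma Tf_summable_norm:
  assumes zs: "\<forall>z\<in>set zs. 1 < z" and K: "\<bar>K\<bar> * prod_list zs < 1"
  shows "summable (\<lambda>m. norm (Tf zs m / real m * K ^ m))"
proof -
  have nn: "\<forall>w\<in>set zs. 0 \<le> w" using zs by auto
  have "summable (\<lambda>m. Tf zs m / real m * \<bar>K\<bar> ^ m)"
    by (rule Tf_summable[OF zs]) (use K in auto)
  moreover have "(\<lambda>m. norm (Tf zs m / real m * K ^ m)) = (\<lambda>m. Tf zs m / real m * \<bar>K\<bar> ^ m)"
  proof
    fix m
    have "norm (Tf zs m / real m * K ^ m) = \<bar>Tf zs m\<bar> / \<bar>real m\<bar> * \<bar>K\<bar> ^ m"
      by (simp only: real_norm_def abs_mult abs_divide power_abs)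
    also have "\<dots> = Tf zs m / real m * \<bar>K\<bar> ^ m" using Tf_nonneg[OF nn, of m] by simp
    finally show "norm (Tf zs m / real m * K ^ m) = Tf zs m / real m * \<bar>K\<bar> ^ m" .
  qed
  ultimately show ?thesis by simp
qed

lemma Lp_deriv0:
  assumes zs: "\<forall>z\<in>set zs. 1 < z" and x: "\<bar>x\<bar> * prod_list zs < 1"
  shows "(Lp zs has_real_derivative (\<Sum>m. Tf zs (Suc m) * x ^ m)) (at x)"
proof -
  have P1: "1 \<le> prod_list zs" using zs by (intro prod_list_ge1) auto
  have "((\<lambda>x. \<Sum>m. Tf zs m / real m * x ^ m) has_field_derivative
          (\<Sum>m. diffs (\<lambda>m. Tf zs m / real m) m * x ^ m)) (at x)"
  proof (rule termdiffs_strong'[where K = "1 / prod_list zs"])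
    fix w :: real assume "norm w < 1 / prod_list zs"
    then have wl: "\<bar>w\<bar> * prod_list zs < 1" using P1 by (simp add: field_simps)
    show "summable (\<lambda>m. Tf zs m / real m * w ^ m)"
      using Tf_summable_norm[OF zs wl] by (rule summable_norm_cancel)
  qed (use x P1 in \<open>simp add: field_simps\<close>)
  moreover have "diffs (\<lambda>m. Tf zs m / real m) m = Tf zs (Suc m)" for m
    by (simp add: diffs_def)
  ultimately show ?thesis unfolding Lp_def by simp
qed

lemma Lp_deriv_Nil:
  assumes "0 \<le> x" "x < 1"
  shows "(Lp [] has_real_derivative (1 / (1 - x))) (at x)"
proof -
  have "(Lp [] has_real_derivative (\<Sum>m. Tf [] (Suc m) * x ^ m)) (at x)"
    by (rule Lp_deriv0) (use assms in auto)
  moreover have "(\<Sum>m. Tf [] (Suc m) * x ^ m) = (\<Sum>m. x ^ m)"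
    by (simp only: Tf_Nil mult_1)
  moreover have "(\<Sum>m. x ^ m) = 1 / (1 - x)"
    by (rule suminf_geometric) (use assms in simp)
  ultimately show ?thesis by simp
qed

lemma Lp_deriv_Cons:
  assumes zs: "\<forall>w\<in>set (z # zs). 1 < w" and x: "0 \<le> x" "x * prod_list (z # zs) < 1"
  shows "(Lp (z # zs) has_real_derivative (Lp zs (x * z) / (1 - x))) (at x)"
proof -
  have P1: "1 \<le> prod_list (z # zs)" using zs by (intro prod_list_ge1) auto
  have x1: "x < 1"
  proof -
    have "x * 1 \<le> x * prod_list (z # zs)" using P1 x by (intro mult_left_mono) auto
    then show ?thesis using x by simp
  qed
  have "(Lp (z # zs) has_real_derivative (\<Sum>m. Tf (z # zs) (Suc m) * x ^ m)) (at x)"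
    by (rule Lp_deriv0) (use assms in auto)
  moreover have "(\<lambda>m. Tf (z # zs) (Suc m) * x ^ m) sums (Lp zs (x * z) * (1 / (1 - x)))"
  proof -
    define A where "A = (\<lambda>i. Tf zs i / real i * (x * z) ^ i)"
    define B where "B = (\<lambda>k. x ^ k :: real)"
    have sA: "summable (\<lambda>i. norm (A i))" unfolding A_def
      by (rule Tf_summable_norm) (use zs x in \<open>auto simp: mult_ac abs_mult\<close>)
    have sB: "summable (\<lambda>k. norm (B k))" unfolding B_def
      using x x1 by (simp add: summable_geometric)
    have "(\<lambda>k. \<Sum>i\<le>k. A i * B (k - i)) sums ((\<Sum>k. A k) * (\<Sum>k. B k))"
      by (rule Cauchy_product_sums[OF sA sB])
    moreover have "(\<Sum>k. A k) = Lp zs (x * z)" unfolding A_def Lp_def ..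
    moreover have "(\<Sum>k. B k) = 1 / (1 - x)" unfolding B_def using suminf_geometric[of x] x x1 by simp
    moreover have "(\<Sum>i\<le>k. A i * B (k - i)) = Tf (z # zs) (Suc k) * x ^ k" for k
    proof -
      have "(\<Sum>i\<le>k. A i * B (k - i)) = (\<Sum>i\<le>k. z ^ i / real i * Tf zs i * x ^ k)"
      proof (intro sum.cong refl)
        fix i assume "i \<in> {..k}"
        then have "x ^ k = x ^ i * x ^ (k - i)" by (simp add: power_add[symmetric])
        then show "A i * B (k - i) = z ^ i / real i * Tf zs i * x ^ k"
          unfolding A_def B_def by (simp add: power_mult_distrib)
      qed
      also have "\<dots> = Tf (z # zs) (Suc k) * x ^ k"
        by (simp add: Tf_Cons lessThan_Suc_atMost sum_distrib_right)
      finally show ?thesis .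
    qed
    ultimately show ?thesis by simp
  qed
  ultimately show ?thesis by (simp add: sums_iff)
qed

lemma Lp_zero: "Lp zs 0 = 0"
  unfolding Lp_def by (simp only: powser_zero) simp

lemma Lp_has_sum:
  assumes zs: "\<forall>z\<in>set zs. 1 < z" and x: "0 \<le> x" "x * prod_list zs < 1"
  shows "(pr (x # zs) has_sum Lp zs x) (Midx (Suc (length zs)))"
proof -
  have nn: "\<forall>w\<in>set zs. 0 \<le> w" using zs by auto
  define S where "S = (SIGMA a:UNIV. {t. 0 < a \<and> t \<in> Idx (length zs) a})"
  define f where "f = (\<lambda>p. pr (x # zs) (fst p # snd p))"
  define g where "g = (\<lambda>a. Tf zs a / real a * x ^ a)"
  have fib: "((\<lambda>t. f (a, t)) has_sum g a) {t. 0 < a \<and> t \<in> Idx (length zs) a}" for a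
  proof -
    have fin: "finite {t. 0 < a \<and> t \<in> Idx (length zs) a}"
      by (rule finite_subset[OF _ finite_Idx[of "length zs" a]]) auto
    have "(\<Sum>t\<in>{t. 0 < a \<and> t \<in> Idx (length zs) a}. f (a, t)) = g a"
      unfolding f_def g_def by (simp only: fst_conv snd_conv pr_Cons fiber_sum[OF refl]) (simp add: mult_ac)
    then show ?thesis using has_sum_finite[OF fin, of "\<lambda>t. f (a, t)"] by simp
  qed
  have gs: "(g has_sum Lp zs x) UNIV"
  proof (rule sums_nonneg_imp_has_sum)
    show "g sums Lp zs x" unfolding g_def Lp_def
      by (rule summable_sums, rule Tf_summable[OF zs x])
    show "0 \<le> g n" for n unfolding g_def using Tf_nonneg[OF nn, of n] x by simp
  qed
  have fnn: "0 \<le> f (a, t)" for a t unfolding f_def using nn x by (intro pr_nonneg) auto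
  have "f summable_on S"
    unfolding S_def by (rule summable_on_SigmaI[OF fib]) (use gs fnn in \<open>auto dest: has_sum_imp_summable\<close>)
  then have "(f has_sum Lp zs x) S"
    unfolding S_def by (rule has_sum_SigmaI[OF fib gs, rotated])
  then have "((pr (x # zs) \<circ> (\<lambda>(a, t). a # t)) has_sum Lp zs x) S"
    unfolding f_def by (simp add: o_def case_prod_beta)
  then show ?thesis
    unfolding Midx_Suc_image S_def by (subst has_sum_reindex[OF inj_Cons_pair])
qed


definition zt :: "nat \<Rightarrow> nat \<Rightarrow> real list" where
  "zt n j = map (\<lambda>k. (real n + 1 - real k) / (real n - real k)) [1..<j]"

lemma zt_gt1: "j \<le> n \<Longrightarrow> \<forall>z\<in>set (zt n j). 1 < z"
  unfolding zt_def by (auto simp: field_simps)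

lemma cancel_helper: "(a::real) \<noteq> 0 \<Longrightarrow> c / a * (a / b) = c / b"
  by (simp add: field_simps)

lemma div_helper: "(n::real) \<noteq> 0 \<Longrightarrow> n \<noteq> y \<Longrightarrow> A / (1 - y / n) * (1 / n) = A / (n - y)"
  by (simp add: field_simps)

lemma zt_1: "zt n 1 = []"
  by (simp add: zt_def)

lemma prod_zt: "1 \<le> j \<Longrightarrow> j \<le> n \<Longrightarrow> prod_list (zt n j) = real n / (real n + 1 - real j)"
proof (induction j)
  case 0 then show ?case by simp
next
  case (Suc j)
  show ?case
  proof (cases "j = 0")
    case True then show ?thesis using Suc by (simp add: zt_def)
  next
    case False
    then have j1: "1 \<le> j" by simp
    have "zt n (Suc j) = zt n j @ [(real n + 1 - real j) / (real n - real j)]"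
      using j1 by (simp add: zt_def)
    then have "prod_list (zt n (Suc j)) = real n / (real n + 1 - real j) * ((real n + 1 - real j) / (real n - real j))"
      using Suc j1 by simp
    also have "\<dots> = real n / (real n + 1 - real (Suc j))"
    proof -
      have a: "real n + 1 - real j \<noteq> 0" and b: "real n - real j \<noteq> 0" using Suc.prems by auto
      have "real n / (real n + 1 - real j) * ((real n + 1 - real j) / (real n - real j)) = real n / (real n - real j)"
        using a by (rule cancel_helper)
      then show ?thesis by simp
    qed
    finally show ?thesis .
  qed
qed

lemma zt_Suc: "1 \<le> j \<Longrightarrow> 2 \<le> n \<Longrightarrow> zt n (Suc j) = (real n / (real n - 1)) # zt (n - 1) j"
proof -
  assume j: "1 \<le> j" and n: "2 \<le> n"
  have u: "[1..<Suc j] = 1 # map Suc [1..<j]" using j by (simp add: upt_conv_Cons map_Suc_upt)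
  have r: "real (n - Suc 0) = real n - 1" using n by (simp add: of_nat_diff)
  show ?thesis unfolding zt_def u
    by (simp add: r algebra_simps)
qed

lemma map_zpar: "1 \<le> j \<Longrightarrow> map (zpar n y) [0..<j] = (y / real n) # zt n j"
proof -
  assume j: "1 \<le> j"
  have "[0..<j] = 0 # [1..<j]" using j by (simp add: upt_conv_Cons)
  moreover have "map (zpar n y) [1..<j] = zt n j"
    unfolding zt_def by (rule map_cong) (auto simp: zpar_def)
  ultimately show ?thesis by (simp add: zpar_def)
qed

lemma M_eq:
  assumes j: "1 \<le> j" "j < n" and y: "0 \<le> y" "y \<le> 1"
  shows "M j n y = Lp (zt n j) (y / real n)"
proof -
  have "M j n y = infsum (pr (map (zpar n y) [0..<j])) (Midx j)"
    unfolding M_def pr_def by (intro infsum_cong prod.cong) auto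
  also have "\<dots> = infsum (pr ((y / real n) # zt n j)) (Midx (Suc (length (zt n j))))"
    using j by (simp add: map_zpar zt_def)
  also have "\<dots> = Lp (zt n j) (y / real n)"
  proof (rule infsumI, rule Lp_has_sum)
    show "\<forall>z\<in>set (zt n j). 1 < z" using j by (intro zt_gt1) auto
    show "0 \<le> y / real n" using y by simp
    have "y / real n * prod_list (zt n j) = y / (real n + 1 - real j)"
      using j by (simp add: prod_zt)
    also have "\<dots> < 1" using j y by (simp add: field_simps)
    finally show "y / real n * prod_list (zt n j) < 1" .
  qed
  finally show ?thesis .
qed

lemma Mz_deriv:
  assumes j: "1 \<le> j" "j < n" and y: "0 \<le> y" "y \<le> 1"
  shows "((\<lambda>y. Lp (zt n j) (y / real n)) has_real_derivative
           (if j = 1 then 1 else Lp (zt (n - 1) (j - 1)) (y / (real n - 1))) / (real n - y)) (at y)"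
proof -
  have dg: "((\<lambda>y. y / real n) has_real_derivative 1 / real n) (at y)"
    by (rule DERIV_cdivide[OF DERIV_ident])
  have n2: "2 \<le> n" using j by simp
  show ?thesis
  proof (cases "j = 1")
    case True
    have "(Lp [] has_real_derivative (1 / (1 - y / real n))) (at (y / real n))"
      by (rule Lp_deriv_Nil) (use y n2 in \<open>auto simp: field_simps\<close>)
    from DERIV_chain2[OF this dg] True show ?thesis
      using n2 y by (simp add: zt_def field_simps)
  next
    case False
    then obtain j' where j': "j = Suc j'" "1 \<le> j'" using j by (cases j) auto
    have eq: "zt n j = (real n / (real n - 1)) # zt (n - 1) j'"
      using j' n2 by (simp add: zt_Suc)
    have g1: "\<forall>w\<in>set (zt n j). 1 < w" using j by (intro zt_gt1) auto
    have "y / real n * prod_list (zt n j) = y / (real n + 1 - real j)"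
      using j by (simp add: prod_zt)
    also have "\<dots> < 1" using j y by (simp add: field_simps)
    finally have p1: "y / real n * prod_list (zt n j) < 1" .
    have "(Lp (zt n j) has_real_derivative
            (Lp (zt (n - 1) j') (y / real n * (real n / (real n - 1))) / (1 - y / real n))) (at (y / real n))"
      unfolding eq by (rule Lp_deriv_Cons) (use g1 p1 y in \<open>auto simp: eq\<close>)
    from DERIV_chain2[OF this dg] have d:
      "((\<lambda>y. Lp (zt n j) (y / real n)) has_real_derivative
        Lp (zt (n - 1) j') (y / real n * (real n / (real n - 1))) / (1 - y / real n) * (1 / real n)) (at y)" .
    have e: "y / real n * (real n / (real n - 1)) = y / (real n - 1)" using n2 by simp
    have e2: "Lp (zt (n - 1) j') (y / (real n - 1)) / (1 - y / real n) * (1 / real n)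
        = Lp (zt (n - 1) j') (y / (real n - 1)) / (real n - y)"
      by (rule div_helper) (use n2 y in auto)
    have e3: "(if j = 1 then 1 else Lp (zt (n - 1) (j - 1)) (y / (real n - 1))) / (real n - y)
        = Lp (zt (n - 1) j') (y / (real n - 1)) / (real n - y)"
      using False j' by simp
    show ?thesis using d unfolding e e2 e3 .
  qed
qed

definition Fn :: "nat \<Rightarrow> real \<Rightarrow> real" where
  "Fn n y = dickman (real n) + (\<Sum>j = 1..n - 1. dickman (real n - real j) * Lp (zt n j) (y / real n))"

lemma Fn_deriv:
  assumes y: "0 \<le> y" "y \<le> 1"
  shows "(Fn n has_real_derivative
     (\<Sum>j = 1..n - 1. dickman (real n - real j) *
        ((if j = 1 then 1 else Lp (zt (n - 1) (j - 1)) (y / (real n - 1))) / (real n - y)))) (at y)"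
proof -
  have "((\<lambda>y. \<Sum>j = 1..n - 1. dickman (real n - real j) * Lp (zt n j) (y / real n)) has_real_derivative
     (\<Sum>j = 1..n - 1. dickman (real n - real j) *
        ((if j = 1 then 1 else Lp (zt (n - 1) (j - 1)) (y / (real n - 1))) / (real n - y)))) (at y)"
  proof (rule DERIV_sum)
    fix j assume "j \<in> {1..n - 1}"
    then have "1 \<le> j" "j < n" by auto
    then show "((\<lambda>y. dickman (real n - real j) * Lp (zt n j) (y / real n)) has_real_derivative
        dickman (real n - real j) * ((if j = 1 then 1 else Lp (zt (n - 1) (j - 1)) (y / (real n - 1))) / (real n - y))) (at y)"
      by (intro DERIV_cmult Mz_deriv) (use y in auto)
  qed
  from DERIV_add[OF DERIV_const this] show ?thesis unfolding Fn_def by simp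
qed

lemma Fn_zero: "Fn n 0 = dickman (real n)"
  by (simp add: Fn_def Lp_zero)

lemma deriv_sum_eq:
  "(\<Sum>j = 1..Suc k. dickman (real (Suc (Suc k)) - real j) *
        ((if j = 1 then 1 else Lp (zt (Suc (Suc k) - 1) (j - 1)) (y / (real (Suc (Suc k)) - 1))) / (real (Suc (Suc k)) - y)))
   = Fn (Suc k) y / (real (Suc (Suc k)) - y)"
  (is "?L = ?R")
proof -
  define d where "d = real (Suc (Suc k)) - y"
  define g where "g = (\<lambda>j. dickman (real (Suc (Suc k)) - real j) *
        ((if j = 1 then 1 else Lp (zt (Suc (Suc k) - 1) (j - 1)) (y / (real (Suc (Suc k)) - 1))) / d))"
  have "?L = (\<Sum>j = 1..Suc k. g j)" unfolding g_def d_def ..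
  also have "\<dots> = g 1 + (\<Sum>j = Suc 1..Suc k. g j)"
    by (rule sum.atLeast_Suc_atMost) simp
  also have "(\<Sum>j = Suc 1..Suc k. g j) = (\<Sum>i = 1..k. g (Suc i))"
    by (rule sum.shift_bounds_cl_Suc_ivl)
  also have "\<dots> = (\<Sum>i = 1..k. dickman (real (Suc k) - real i) * (Lp (zt (Suc k) i) (y / real (Suc k)) / d))"
  proof (rule sum.cong[OF refl])
    fix i assume "i \<in> {1..k}"
    then have ne: "Suc i \<noteq> 1" by auto
    have e1: "real (Suc (Suc k)) - real (Suc i) = real (Suc k) - real i" by simp
    have e2: "Suc (Suc k) - 1 = Suc k" by simp
    have e3: "real (Suc (Suc k)) - 1 = real (Suc k)" by simp
    have e4: "Suc i - 1 = i" by simp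
    show "g (Suc i) = dickman (real (Suc k) - real i) * (Lp (zt (Suc k) i) (y / real (Suc k)) / d)"
      unfolding g_def by (simp only: ne e1 e2 e3 e4 if_False)
  qed
  also have "g 1 = dickman (real (Suc k)) * (1 / d)" unfolding g_def by simp
  finally have "?L = dickman (real (Suc k)) * (1 / d) +
      (\<Sum>i = 1..k. dickman (real (Suc k) - real i) * (Lp (zt (Suc k) i) (y / real (Suc k)) / d))" .
  also have "\<dots> = Fn (Suc k) y / d"
    by (simp add: Fn_def add_divide_distrib sum_divide_distrib)
  finally show ?thesis unfolding d_def .
qed

lemma main:
  "0 \<le> y \<Longrightarrow> y \<le> 1 \<Longrightarrow> dickman (real (Suc m) - y) = Fn (Suc m) y"
proof (induction m arbitrary: y)
  case 0
  then show ?case by (simp add: Fn_def dickman_rho rho_01)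
next
  case (Suc k)
  define n where "n = Suc (Suc k)"
  define H where "H = (\<lambda>y. dickman (real n - y) - Fn n y)"
  have cG: "continuous_on {0..1} (\<lambda>y. dickman (real n - y))"
    unfolding dickman_rho
    by (rule continuous_on_compose2[OF rho_cont]) (auto intro!: continuous_intros simp: n_def)
  have cF: "continuous_on {0..1} (Fn n)"
    by (rule continuous_at_imp_continuous_on) (auto intro: DERIV_isCont[OF Fn_deriv])
  have cH: "continuous_on {0..1} H"
    unfolding H_def by (rule continuous_on_diff[OF cG cF])
  have dH: "DERIV H x :> 0" if x: "0 < x" "x < 1" for x
  proof -
    have u1: "1 < real n - x" using x by (simp add: n_def)
    have dG: "((\<lambda>y. dickman (real n - y)) has_real_derivative (- dickman (real n - x - 1) / (real n - x)) * (- 1)) (at x)"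
    proof -
      have dm: "((\<lambda>y. real n - y) has_real_derivative -1) (at x)"
        by (auto intro!: derivative_eq_intros)
      show ?thesis unfolding dickman_rho
        by (rule DERIV_chain2[where g="\<lambda>y. real n - y" and x=x, OF rho_deriv[OF u1] dm])
    qed
    have dF: "(Fn n has_real_derivative Fn (Suc k) x / (real n - x)) (at x)"
      using Fn_deriv[of x n] deriv_sum_eq[of k x] x unfolding n_def by simp
    have "Fn (Suc k) x = dickman (real n - x - 1)"
      using Suc.IH[of x] x by (simp add: n_def algebra_simps)
    then show ?thesis unfolding H_def using DERIV_diff[OF dG dF] by simp
  qed
  have "H y = H 0"
    by (rule DERIV_isconst2[OF _ cH dH]) (use Suc.prems in auto)
  moreover have "H 0 = 0" unfolding H_def by (simp add: Fn_zero)
  ultimately show ?case unfolding H_def n_def by simp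
qed

theorem theorem1:
  fixes n :: nat and y :: real
  assumes "n \<ge> 1" and "0 \<le> y" and "y \<le> 1"
  shows "dickman (real n - y) =
           dickman (real n) + (\<Sum>j = 1..n - 1. dickman (real n - real j) * M j n y)"
proof -
  obtain m where m: "n = Suc m" using assms(1) by (cases n) auto
  have "(\<Sum>j = 1..n - 1. dickman (real n - real j) * M j n y)
      = (\<Sum>j = 1..n - 1. dickman (real n - real j) * Lp (zt n j) (y / real n))"
    by (intro sum.cong refl) (use assms in \<open>auto simp: M_eq\<close>)
  then have "dickman (real n) + (\<Sum>j = 1..n - 1. dickman (real n - real j) * M j n y) = Fn n y"
    by (simp add: Fn_def)
  with main[OF assms(2,3), of m] m show ?thesis by simp
qed

end
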